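(* Let $s,t,p\ge 1$, $A,B\in GL(n)$ and $Q\in\mathcal{P}(n)$. The equation $X^s+A^*X^{-t}A+B^*X^{-p}B=Q$ has a Hermitian positive definite solution if and only if $A$ and $B$ can be factored as $$A=(U\Lambda U^* )^{\frac{t}{2s}}N_1,\qquad B=(U\Lambda U^* )^{\frac{p}{2s}}N_2,$$ where $U$ is an $n\times n$ unitary matrix, $\Lambda$ is an $n\times n$ diagonal matrix with positive diagonal entries, $N_1,N_2$ are $n\times n$ matrices, and the $3n\times n$ matrix $$\begin{pmatrix}\Lambda^{1/2}U^*Q^{-1/2}\\ N_1Q^{-1/2}\\ N_2Q^{-1/2}\end{pmatrix}$$ is column orthonormal (i.e. $M^*M=I_n$ for this matrix $M$).
   Context: $GL(n)$: $n\times n$ complex nonsingular matrices; $\mathcal{P}(n)$: $n\times n$ Hermitian positive definite matrices. Real powers of positive definite matrices are defined by functional calculus. *)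

theory Defs
  imports "HOL-Analysis.Analysis"
begin

definition cadj :: "complex^'n^'m \<Rightarrow> complex^'m^'n" where
  "cadj A = (\<chi> i j. cnj (A $ j $ i))"

definition unitary_mat :: "complex^'n^'n \<Rightarrow> bool" where
  "unitary_mat U \<longleftrightarrow> cadj U ** U = mat 1 \<and> U ** cadj U = mat 1"

definition hermitian_mat :: "complex^'n^'n \<Rightarrow> bool" where
  "hermitian_mat A \<longleftrightarrow> cadj A = A"

text \<open>Hermitian positive definite: x^* A x > 0 for all nonzero x (the form is real for Hermitian A).\<close>
definition posdef_mat :: "complex^'n^'n \<Rightarrow> bool" where
  "posdef_mat A \<longleftrightarrow> hermitian_mat A \<and>
     (\<forall>x::complex^'n. x \<noteq> 0 \<longrightarrow> Re (\<Sum>i\<in>UNIV. cnj (x $ i) * (A *v x) $ i) > 0)"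

definition cdiag :: "('n \<Rightarrow> real) \<Rightarrow> complex^'n^'n" where
  "cdiag d = (\<chi> i j. if i = j then complex_of_real (d i) else 0)"

definition mpow :: "complex^'n^'n \<Rightarrow> real \<Rightarrow> complex^'n^'n" where
  "mpow X r = (SOME Y. \<exists>U d. unitary_mat U \<and> (\<forall>i. d i > 0) \<and>
       X = U ** cdiag d ** cadj U \<and> Y = U ** cdiag (\<lambda>i. d i powr r) ** cadj U)"

end

theory Submission
  imports Defs
begin


lemma cadj_mult: "cadj (A ** B) = cadj B ** cadj (A::complex^'n^'m)"
  by (simp add: cadj_def matrix_matrix_mult_def vec_eq_iff mult.commute)

lemma cadj_cadj[simp]: "cadj (cadj A) = A"
  by (simp add: cadj_def vec_eq_iff)

lemma cadj_add: "cadj (A + B) = cadj A + cadj B"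
  by (simp add: cadj_def vec_eq_iff)

lemma cadj_mat1[simp]: "cadj (mat 1 :: complex^'n^'n) = mat 1"
  by (simp add: cadj_def vec_eq_iff mat_def)

lemma cadj_cdiag[simp]: "cadj (cdiag d) = cdiag d"
  by (simp add: cadj_def vec_eq_iff cdiag_def)

lemma cdiag_mult: "cdiag a ** cdiag b = cdiag (\<lambda>i. a i * b i)"
proof -
  have "(\<Sum>k\<in>UNIV. (if i = k then complex_of_real (a i) else 0) * (if k = j then complex_of_real (b k) else 0))
     = (if i = j then complex_of_real (a i * b i) else 0)" for i j :: 'a
  proof (cases "i = j")
    case True
    then show ?thesis by (simp add: if_distrib[of "\<lambda>x. x * _"] cong: if_cong)
  next
    case False
    then show ?thesis by (simp, intro sum.neutral) auto
  qed
  then show ?thesis by (simp add: cdiag_def vec_eq_iff matrix_matrix_mult_def)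
qed

lemma cdiag_one: "cdiag (\<lambda>i. 1) = mat 1"
  by (simp add: cdiag_def vec_eq_iff mat_def)

definition cinner :: "complex^'n \<Rightarrow> complex^'n \<Rightarrow> complex" where
  "cinner x y = (\<Sum>i\<in>UNIV. cnj (x $ i) * y $ i)"

lemma cinner_mv: "cinner x (A *v y) = cinner (cadj A *v x) y"
  unfolding cinner_def matrix_vector_mult_def cadj_def by (simp add: sum_distrib_left sum_distrib_right
 mult_ac) (rule sum.swap)



lemma unitary_mat1: "unitary_mat (mat 1)"
  by (simp add: unitary_mat_def)

lemma unit_simps:
  assumes "unitary_mat U"
  shows "X ** cadj U ** U = X" "X ** U ** cadj U = X" "cadj U ** U = mat 1" "U ** cadj U = mat 1"
  using assms unfolding unitary_mat_def by (simp_all add: matrix_mul_assoc[symmetric])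

lemma mm_assoc4: "U ** D ** cadj U ** (V ** E ** W) = U ** (D ** (cadj U ** V) ** E) ** W"
  by (simp add: matrix_mul_assoc)

lemma cdiag_comm_aux:
  fixes W :: "complex^'n^'n"
  assumes "W ** cdiag d = cdiag e ** W"
  shows "W ** cdiag (\<lambda>i. f (d i)) = cdiag (\<lambda>i. f (e i)) ** W"
proof -
  have entry: "W ** cdiag g = (\<chi> i j. W $ i $ j * complex_of_real (g j))" for g
    by (simp add: vec_eq_iff matrix_matrix_mult_def cdiag_def if_distrib[of "\<lambda>x. _ * x"] cong: if_cong)
  have entry2: "cdiag g ** W = (\<chi> i j. complex_of_real (g i) * W $ i $ j)" for g
    by (simp add: vec_eq_iff matrix_matrix_mult_def cdiag_def if_distrib[of "\<lambda>x. x * _"] cong: if_cong)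
  have h: "W $ i $ j * complex_of_real (d j) = complex_of_real (e i) * W $ i $ j" for i j
  proof -
    have "(W ** cdiag d) $ i $ j = (cdiag e ** W) $ i $ j" using assms by simp
    then show ?thesis unfolding entry entry2 by simp
  qed
  have "W $ i $ j * complex_of_real (f (d j)) = complex_of_real (f (e i)) * W $ i $ j" for i j
  proof (cases "W $ i $ j = 0")
    case False
    then have "d j = e i" using h[of i j] by (simp add: mult.commute)
    then show ?thesis by (simp add: mult.commute)
  qed simp
  then show ?thesis unfolding entry entry2 by (simp add: vec_eq_iff)
qed

lemma fc_unique:
  assumes U: "unitary_mat U" and V: "unitary_mat V"
    and eq: "U ** cdiag d ** cadj U = V ** cdiag e ** cadj V"
  shows "U ** cdiag (\<lambda>i. f (d i)) ** cadj U = V ** cdiag (\<lambda>i. f (e i)) ** cadj V"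
proof -
  define W where "W = cadj V ** U"
  have "cadj V ** (U ** cdiag d ** cadj U) ** U = cadj V ** (V ** cdiag e ** cadj V) ** U"
    using eq by simp
  then have "W ** cdiag d = cdiag e ** W"
    using U V unfolding W_def by (simp add: matrix_mul_assoc unit_simps)
  then have c: "W ** cdiag (\<lambda>i. f (d i)) = cdiag (\<lambda>i. f (e i)) ** W"
    by (rule cdiag_comm_aux)
  have VW: "V ** W = U" using V unfolding W_def unitary_mat_def by (simp add: matrix_mul_assoc)
  have "U ** cdiag (\<lambda>i. f (d i)) ** cadj U = V ** (W ** cdiag (\<lambda>i. f (d i))) ** cadj U"
    using VW by (simp add: matrix_mul_assoc)
  also have "\<dots> = V ** cdiag (\<lambda>i. f (e i)) ** (W ** cadj U)"
    using c by (simp add: matrix_mul_assoc)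
  also have "W ** cadj U = cadj V"
    using U unfolding W_def by (simp add: unit_simps)
  finally show ?thesis .
qed

definition fcalc :: "complex^'n^'n \<Rightarrow> ('n \<Rightarrow> real) \<Rightarrow> real \<Rightarrow> complex^'n^'n" where
  "fcalc U d a = U ** cdiag (\<lambda>i. d i powr a) ** cadj U"

lemma mpow_eq:
  assumes U: "unitary_mat U" and d: "\<forall>i. d i > 0"
  shows "mpow (U ** cdiag d ** cadj U) r = fcalc U d r"
proof -
  let ?P = "\<lambda>Y. \<exists>U' d'. unitary_mat U' \<and> (\<forall>i. d' i > 0) \<and>
       U ** cdiag d ** cadj U = U' ** cdiag d' ** cadj U' \<and> Y = U' ** cdiag (\<lambda>i. d' i powr r) ** cadj U'"
  have "?P (fcalc U d r)" using U d unfolding fcalc_def by blast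
  then have "?P (mpow (U ** cdiag d ** cadj U) r)"
    unfolding mpow_def by (rule someI)
  then obtain U' d' where "unitary_mat U'" "U ** cdiag d ** cadj U = U' ** cdiag d' ** cadj U'"
     "mpow (U ** cdiag d ** cadj U) r = U' ** cdiag (\<lambda>i. d' i powr r) ** cadj U'" by blast
  then show ?thesis unfolding fcalc_def using fc_unique[OF U, of U' d d' "\<lambda>x. x powr r"] by simp
qed

lemma cadj_fcalc: "cadj (fcalc U d a) = fcalc U d a"
  by (simp add: fcalc_def cadj_mult matrix_mul_assoc)

lemma fcalc_mult:
  assumes U: "unitary_mat U"
  shows "fcalc U d a ** fcalc U d b = fcalc U d (a + b)"
proof -
  have "fcalc U d a ** fcalc U d b = U ** (cdiag (\<lambda>i. d i powr a) ** (cadj U ** U) ** cdiag (\<lambda>i. d i powr b)) ** cadj U"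
    unfolding fcalc_def by (simp add: matrix_mul_assoc)
  also have "\<dots> = fcalc U d (a + b)"
    using U unfolding fcalc_def unitary_mat_def by (simp add: cdiag_mult powr_add)
  finally show ?thesis .
qed

lemma fcalc_zero:
  assumes U: "unitary_mat U" and d: "\<forall>i. d i > 0"
  shows "fcalc U d 0 = mat 1"
proof -
  have "d i powr 0 = 1" for i using d[rule_format, of i] by simp
  then have "(\<lambda>i. d i powr 0) = (\<lambda>i. 1)" by simp
  then show ?thesis using U unfolding fcalc_def unitary_mat_def by (simp add: cdiag_one)
qed

lemma fcalc_one:
  assumes d: "\<forall>i. d i > 0"
  shows "fcalc U d 1 = U ** cdiag d ** cadj U"
proof -
  have "(\<lambda>i. d i powr 1) = d" using d by (auto intro!: ext simp: less_imp_le)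
  then show ?thesis unfolding fcalc_def by simp
qed

lemma pos_powr: "\<forall>i. d i > (0::real) \<Longrightarrow> \<forall>i. d i powr c > 0"
proof (intro allI)
  fix i assume "\<forall>i. d i > (0::real)"
  then have "d i > 0" by blast
  then show "d i powr c > 0" by simp
qed

lemma mpow_fcalc:
  assumes U: "unitary_mat U" and d: "\<forall>i. d i > 0"
  shows "mpow (fcalc U d c) a = fcalc U d (c * a)"
proof -
  have "mpow (fcalc U d c) a = fcalc U (\<lambda>i. d i powr c) a"
    unfolding fcalc_def[of U d c] by (rule mpow_eq[OF U]) (rule pos_powr[OF d])
  also have "\<dots> = fcalc U d (c * a)"
    unfolding fcalc_def by (simp add: powr_powr)
  finally show ?thesis .
qed

lemma mpow_cdiag:
  assumes d: "\<forall>i. d i > 0"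
  shows "mpow (cdiag d) a = cdiag (\<lambda>i. d i powr a)"
  using mpow_eq[OF unitary_mat1 d, of a] unfolding fcalc_def by simp



lemma scR_comp: "(c *\<^sub>R (x::complex^'n)) $ i = of_real c * x $ i"
  unfolding scaleR_vec_def vec_lambda_beta scaleR_conv_of_real ..

lemma cinner_add_left: "cinner (x + y) z = cinner x z + cinner y z"
  by (simp add: cinner_def distrib_right sum.distrib)
lemma cinner_add_right: "cinner z (x + y) = cinner z x + cinner z y"
  by (simp add: cinner_def distrib_left sum.distrib)
lemma cinner_diff_right: "cinner z (x - y) = cinner z x - cinner z y"
  by (simp add: cinner_def right_diff_distrib sum_subtractf)
lemma cinner_scaleR_left: "cinner (c *\<^sub>R x) z = of_real c * cinner x z"
  by (simp add: cinner_def sum_distrib_left scR_comp mult_ac del: vector_scaleR_component)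
lemma cinner_scaleR_right: "cinner z (c *\<^sub>R x) = of_real c * cinner z x"
  by (simp add: cinner_def sum_distrib_left scR_comp mult_ac del: vector_scaleR_component)
lemma cinner_smult_left: "cinner (c *s x) z = cnj c * cinner x z"
  by (simp add: cinner_def sum_distrib_left mult_ac)
lemma cinner_smult_right: "cinner z (c *s x) = c * cinner z x"
  by (simp add: cinner_def sum_distrib_left mult_ac)
lemma cinner_commute: "cinner y x = cnj (cinner x y)"
  by (simp add: cinner_def mult.commute)
lemma Re_cinner: "Re (cinner x y) = x \<bullet> y"
  by (simp add: cinner_def inner_vec_def inner_complex_def Re_sum)
lemma Im_cinner: "Im (cinner x y) = (\<i> *s x) \<bullet> y"
  by (simp add: cinner_def inner_vec_def inner_complex_def Im_sum)
lemma cinner_self: "cinner x x = of_real (x \<bullet> x)"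
proof -
  have "Im (cinner x x) = 0" by (simp add: cinner_def Im_sum)
  then show ?thesis using Re_cinner[of x x] by (simp add: complex_eq_iff)
qed
lemma cinner_self_eq_0: "cinner x x = 0 \<longleftrightarrow> x = 0"
  by (simp add: cinner_self)
lemma cinner_zero_right[simp]: "cinner x 0 = 0"
  by (simp add: cinner_def)
lemma cinner_zero_left[simp]: "cinner 0 x = 0"
  by (simp add: cinner_def)

lemma mv_add: "A *v (x + y) = A *v x + A *v (y :: complex^'n)"
  by (simp add: matrix_vector_right_distrib)
lemma mv_scaleR: "A *v (c *\<^sub>R x) = c *\<^sub>R (A *v (x :: complex^'n))"
  by (simp add: vec_eq_iff matrix_vector_mult_def scR_comp sum_distrib_left mult_ac del: vector_scaleR_component)
lemma mv_smult: "A *v (c *s x) = c *s (A *v (x :: complex^'n))"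
  by (simp add: vec_eq_iff matrix_vector_mult_def sum_distrib_left mult_ac)

lemma herm_cinner: "cadj A = A \<Longrightarrow> cinner x (A *v y) = cinner (A *v x) y"
  using cinner_mv[of x A y] by simp

lemma cont_cinner[continuous_intros]:
  "continuous_on S f \<Longrightarrow> continuous_on S g \<Longrightarrow> continuous_on S (\<lambda>x. cinner (f x) (g x))"
  unfolding cinner_def by (intro continuous_intros)

lemma cont_mv[continuous_intros]:
  "continuous_on S f \<Longrightarrow> continuous_on S (\<lambda>x. (A::complex^'n^'m) *v f x)"
  unfolding matrix_vector_mult_def by (intro continuous_intros)



lemma exists_orth:
  fixes S :: "(complex^'n) set"
  assumes fin: "finite S" and card: "card S < CARD('n)"
  shows "\<exists>y. y \<noteq> 0 \<and> (\<forall>s\<in>S. cinner s y = 0)"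
proof -
  let ?T = "S \<union> (\<lambda>s. \<i> *s s) ` S"
  have finT: "finite ?T" using fin by simp
  have "card ?T \<le> card S + card ((\<lambda>s. \<i> *s s) ` S)" by (rule card_Un_le)
  also have "card ((\<lambda>s. \<i> *s s) ` S) \<le> card S" by (rule card_image_le) (rule fin)
  finally have cT: "card ?T < DIM(complex^'n)" using card by simp
  have "span ?T \<noteq> UNIV"
  proof
    assume "span ?T = UNIV"
    then have "dim (UNIV::(complex^'n) set) \<le> card ?T" using dim_le_card[of UNIV ?T] finT by auto
    then show False using cT by simp
  qed
  then obtain a::"complex^'n" where a: "a \<noteq> 0" "\<forall>x\<in>span ?T. a \<bullet> x = 0"
    using span_not_UNIV_orthogonal by blast
  have "cinner s a = 0" if "s \<in> S" for s
  proof -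
    have "a \<bullet> s = 0" "a \<bullet> (\<i> *s s) = 0" using a(2) that by (auto intro: span_base)
    then have "Re (cinner s a) = 0" "Im (cinner s a) = 0"
      by (simp_all add: Re_cinner Im_cinner inner_commute)
    then show ?thesis by (simp add: complex_eq_iff)
  qed
  with a show ?thesis by blast
qed

lemma quad_zero:
  fixes a b :: real
  assumes h: "\<And>c. 0 \<le> 2 * c * a + c^2 * b"
  shows "a = 0"
proof (rule ccontr)
  assume a0: "a \<noteq> 0"
  define t where "t = 1 / (\<bar>b\<bar> + 1)"
  have t: "t > 0" "t * b < 1"
  proof -
    show "t > 0" unfolding t_def by simp
    have "b < \<bar>b\<bar> + 1" by simp
    then show "t * b < 1" unfolding t_def by (simp add: divide_less_eq abs_ge_self)
  qed
  have a2: "a^2 > 0" using a0 by simp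
  have eq: "2 * (-a*t) * a + (-a*t)^2 * b = (a^2 * t) * (t * b - 2)"
    by (simp add: power2_eq_square algebra_simps)
  have "(a^2 * t) * (t * b - 2) < 0"
    by (rule mult_pos_neg) (use a2 t in auto)
  with h[of "-a*t"] eq show False by linarith
qed

lemma eig_step:
  fixes A :: "complex^'n^'n"
  assumes herm: "cadj A = A" and fin: "finite S" and card: "card S < CARD('n)"
    and eig: "\<forall>v\<in>S. \<exists>c::real. A *v v = c *\<^sub>R v"
  shows "\<exists>x. cinner x x = 1 \<and> (\<forall>s\<in>S. cinner s x = 0) \<and> (\<exists>c::real. A *v x = c *\<^sub>R x)"
proof -
  define W where "W = {x. \<forall>s\<in>S. cinner s x = 0}"
  have W_add: "x \<in> W \<Longrightarrow> y \<in> W \<Longrightarrow> x + y \<in> W" for x y by (simp add: W_def cinner_add_right)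
  have W_scaleR: "x \<in> W \<Longrightarrow> c *\<^sub>R x \<in> W" for x c by (simp add: W_def cinner_scaleR_right)
  have W_smult: "x \<in> W \<Longrightarrow> c *s x \<in> W" for x c by (simp add: W_def cinner_smult_right)
  have W_A: "A *v x \<in> W" if x: "x \<in> W" for x
  proof -
    { fix s assume s: "s \<in> S"
      then obtain c where c: "A *v s = c *\<^sub>R s" using eig by blast
      have "cinner s (A *v x) = cinner (A *v s) x" using herm by (rule herm_cinner)
      also have "\<dots> = 0" using c x s by (simp add: W_def cinner_scaleR_left)
      finally have "cinner s (A *v x) = 0" . }
    then show ?thesis by (simp add: W_def)
  qed
  define K where "K = W \<inter> sphere 0 1"
  obtain y where y: "y \<noteq> 0" "y \<in> W" using exists_orth[OF fin card] unfolding W_def by blast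
  have "(1 / norm y) *\<^sub>R y \<in> K" using y by (simp add: K_def W_scaleR)
  then have Kne: "K \<noteq> {}" by blast
  have "closed W"
  proof -
    have "W = (\<Inter>s\<in>S. {x. cinner s x = 0})" by (auto simp: W_def)
    moreover have "closed {x. cinner s x = 0}" for s
      by (intro closed_Collect_eq continuous_intros)
    ultimately show ?thesis by auto
  qed
  then have cK: "compact K" unfolding K_def by (intro closed_Int_compact compact_sphere)
  define f where "f x = Re (cinner x (A *v x))" for x
  have "continuous_on K f" unfolding f_def by (intro continuous_intros)
  then obtain x where x: "x \<in> K" "\<forall>z\<in>K. f x \<le> f z"
    using continuous_attains_inf[OF cK Kne] by blast
  define l where "l = f x"
  have xW: "x \<in> W" and nx: "norm x = 1" using x(1) by (auto simp: K_def)
  have xx: "cinner x x = 1" using nx by (simp add: cinner_self power2_norm_eq_inner[symmetric])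
  define G where "G u v = cinner u (A *v v) - of_real l * cinner u v" for u v
  have G_nonneg: "Re (G z z) \<ge> 0" if zW: "z \<in> W" for z
  proof (cases "z = 0")
    case True then show ?thesis by (simp add: G_def)
  next
    case False
    let ?u = "(1/norm z) *\<^sub>R z"
    have "?u \<in> K" using zW False by (simp add: K_def W_scaleR)
    then have "l \<le> f ?u" using x(2) l_def by auto
    also have "f ?u = f z / (norm z)^2"
      by (simp add: f_def mv_scaleR cinner_scaleR_left cinner_scaleR_right power2_eq_square)
    finally have "l * norm z ^2 \<le> f z" using False by (simp add: field_simps)
    moreover have "Re (G z z) = f z - l * norm z^2"
      by (simp add: G_def f_def cinner_self power2_norm_eq_inner)
    ultimately show ?thesis by simp
  qed
  have Gxx: "Re (G x x) = 0" by (simp add: G_def xx l_def f_def)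
  have Gsym: "G v u = cnj (G u v)" for u v
  proof -
    have "cnj (cinner u (A *v v)) = cinner (A *v v) u" using cinner_commute[of "A *v v" u] by simp
    also have "\<dots> = cinner v (A *v u)" using herm_cinner[OF herm, of v u] by simp
    finally have 1: "cnj (cinner u (A *v v)) = cinner v (A *v u)" .
    have 2: "cnj (cinner u v) = cinner v u" using cinner_commute[of v u] by simp
    show ?thesis by (simp add: G_def 1 2)
  qed
  have Gexp: "G (u + c *\<^sub>R w) (u + c *\<^sub>R w) = G u u + of_real c * (G u w + G w u) + of_real (c^2) * G w w" for u w c
    by (simp add: G_def mv_add mv_scaleR cinner_add_left cinner_add_right cinner_scaleR_left
        cinner_scaleR_right algebra_simps power2_eq_square)
  have ReG0: "Re (G w x) = 0" if wW: "w \<in> W" for w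
  proof (rule quad_zero)
    fix c :: real
    have "0 \<le> Re (G (x + c *\<^sub>R w) (x + c *\<^sub>R w))" by (intro G_nonneg W_add xW W_scaleR wW)
    also have "\<dots> = 2 * c * Re (G w x) + c^2 * Re (G w w)"
      unfolding Gexp using Gxx Gsym[of x w] by simp
    finally show "0 \<le> 2 * c * Re (G w x) + c^2 * Re (G w w)" .
  qed
  have G0: "G w x = 0" if wW: "w \<in> W" for w
  proof -
    have "Re (G (\<i> *s w) x) = 0" by (intro ReG0 W_smult wW)
    moreover have "G (\<i> *s w) x = - \<i> * G w x"
      by (simp add: G_def cinner_smult_left algebra_simps)
    ultimately have "Im (G w x) = 0" by simp
    with ReG0[OF wW] show ?thesis by (simp add: complex_eq_iff)
  qed
  define r where "r = A *v x + (-l) *\<^sub>R x"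
  have rW: "r \<in> W" unfolding r_def by (intro W_add W_A xW W_scaleR)
  have "G w x = cinner w r" for w
    by (simp add: G_def r_def cinner_add_right cinner_diff_right cinner_scaleR_right)
  then have "cinner r r = 0" using G0[OF rW] by simp
  then have "r = 0" by (simp add: cinner_self_eq_0)
  then have "A *v x = l *\<^sub>R x" unfolding r_def by (simp add: algebra_simps)
  then show ?thesis using xx xW unfolding W_def by blast
qed



lemma orth_eig_sets:
  fixes A :: "complex^'n^'n"
  assumes herm: "cadj A = A"
  shows "k \<le> CARD('n) \<Longrightarrow> \<exists>S. finite S \<and> card S = k \<and>
     (\<forall>u\<in>S. \<forall>v\<in>S. cinner u v = (if u = v then 1 else 0)) \<and> (\<forall>v\<in>S. \<exists>c::real. A *v v = c *\<^sub>R v)"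
proof (induction k)
  case 0
  then show ?case by (intro exI[of _ "{}"]) auto
next
  case (Suc k)
  then obtain S where S: "finite S" "card S = k"
     "\<forall>u\<in>S. \<forall>v\<in>S. cinner u v = (if u = v then 1 else 0)" "\<forall>v\<in>S. \<exists>c::real. A *v v = c *\<^sub>R v"
    by auto
  obtain x where x: "cinner x x = 1" "\<forall>s\<in>S. cinner s x = 0" "\<exists>c::real. A *v x = c *\<^sub>R x"
    using eig_step[OF herm S(1)] S Suc.prems by auto
  have xS: "x \<notin> S" using x(1,2) by force
  have x2: "\<forall>s\<in>S. cinner x s = 0" using x(2) cinner_commute[of x] by simp
  show ?case
    apply (rule exI[of _ "insert x S"])
    using S x x2 xS by auto
qed

lemma mat_entry_diag: "(W ** cdiag g) $ i $ j = W $ i $ j * complex_of_real (g j)"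
  by (simp add: matrix_matrix_mult_def cdiag_def if_distrib[of "\<lambda>x. _ * x"] cong: if_cong)

theorem spectral:
  fixes A :: "complex^'n^'n"
  assumes pd: "posdef_mat A"
  shows "\<exists>U d. unitary_mat U \<and> (\<forall>i. d i > 0) \<and> A = U ** cdiag d ** cadj U"
proof -
  have herm: "cadj A = A" using pd by (simp add: posdef_mat_def hermitian_mat_def)
  obtain S where S: "finite S" "card S = CARD('n)"
     "\<forall>u\<in>S. \<forall>v\<in>S. cinner u v = (if u = v then 1 else 0)" "\<forall>v\<in>S. \<exists>c::real. A *v v = c *\<^sub>R v"
    using orth_eig_sets[OF herm, of "CARD('n)"] by auto
  obtain g where g: "bij_betw g (UNIV::'n set) S"
    using finite_same_card_bij[of "UNIV::'n set" S] S by auto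
  have gS: "g j \<in> S" for j using g by (auto simp: bij_betw_def)
  have ginj: "g j = g k \<longleftrightarrow> j = k" for j k using g by (auto simp: bij_betw_def inj_on_def)
  define U where "U = (\<chi> i j. g j $ i)"
  define d where "d j = (SOME c::real. A *v g j = c *\<^sub>R g j)" for j
  have dA: "A *v g j = d j *\<^sub>R g j" for j
  proof -
    have "\<exists>c::real. A *v g j = c *\<^sub>R g j" using S(4) gS[of j] by blast
    then show ?thesis unfolding d_def by (rule someI_ex)
  qed
  have "cadj U ** U = mat 1"
  proof -
    have "(cadj U ** U) $ j $ k = cinner (g j) (g k)" for j k
      by (simp add: cadj_def U_def matrix_matrix_mult_def cinner_def)
    then have "(cadj U ** U) $ j $ k = mat 1 $ j $ k" for j k
      using S(3) gS[of j] gS[of k] ginj[of j k] by (simp add: mat_def)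
    then show ?thesis by (simp add: vec_eq_iff)
  qed
  then have U: "unitary_mat U" unfolding unitary_mat_def using matrix_left_right_inverse by blast
  have AU: "A ** U = U ** cdiag d"
  proof -
    have "(A ** U) $ i $ j = (A *v g j) $ i" for i j
      by (simp add: U_def matrix_matrix_mult_def matrix_vector_mult_def)
    then show ?thesis by (simp add: vec_eq_iff mat_entry_diag dA U_def scR_comp mult.commute del: vector_scaleR_component)
  qed
  have "A = A ** U ** cadj U" using U by (simp add: unit_simps)
  also have "\<dots> = U ** cdiag d ** cadj U" by (simp add: AU)
  finally have Aeq: "A = U ** cdiag d ** cadj U" .
  have "d j > 0" for j
  proof -
    have g1: "cinner (g j) (g j) = 1" using S(3) gS by simp
    then have "g j \<noteq> 0" by auto
    then have "0 < Re (cinner (g j) (A *v g j))" using pd unfolding posdef_mat_def cinner_def by blast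
    also have "cinner (g j) (A *v g j) = of_real (d j)" by (simp add: dA cinner_scaleR_right g1)
    finally show ?thesis by simp
  qed
  then show ?thesis using U Aeq by blast
qed



lemma cdiag_mv: "(cdiag e *v y) $ i = complex_of_real (e i) * y $ i"
  by (simp add: matrix_vector_mult_def cdiag_def if_distrib[of "\<lambda>x. x * _"] cong: if_cong)

lemma posdef_diag:
  fixes U :: "complex^'n^'n"
  assumes U: "unitary_mat U" and e: "\<forall>i. e i > 0"
  shows "posdef_mat (U ** cdiag e ** cadj U)"
  unfolding posdef_mat_def hermitian_mat_def
proof (intro conjI allI impI)
  show "cadj (U ** cdiag e ** cadj U) = U ** cdiag e ** cadj U"
    by (simp add: cadj_mult matrix_mul_assoc)
  fix x :: "complex^'n" assume x: "x \<noteq> 0"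
  define y where "y = cadj U *v x"
  have "U *v y = x" using U unfolding y_def by (simp add: matrix_vector_mul_assoc unit_simps)
  then have y0: "y \<noteq> 0" using x by auto
  then obtain k where k: "y $ k \<noteq> 0" by (auto simp: vec_eq_iff)
  have "(\<Sum>i\<in>UNIV. cnj (x $ i) * ((U ** cdiag e ** cadj U) *v x) $ i)
      = cinner x (U *v (cdiag e *v y))"
    by (simp add: cinner_def y_def matrix_vector_mul_assoc matrix_mul_assoc)
  also have "\<dots> = cinner y (cdiag e *v y)" by (simp add: cinner_mv y_def)
  finally have eq: "(\<Sum>i\<in>UNIV. cnj (x $ i) * ((U ** cdiag e ** cadj U) *v x) $ i) = cinner y (cdiag e *v y)" .
  have "Re (cinner y (cdiag e *v y)) = (\<Sum>i\<in>UNIV. e i * ((Re (y $ i))\<^sup>2 + (Im (y $ i))\<^sup>2))"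
    by (simp add: cinner_def cdiag_mv Re_sum algebra_simps power2_eq_square)
  also have "\<dots> > 0"
  proof (rule sum_pos2[of UNIV k])
    have "(Re (y $ k))\<^sup>2 + (Im (y $ k))\<^sup>2 > 0" using k
    proof -
      have "Re (y $ k) \<noteq> 0 \<or> Im (y $ k) \<noteq> 0" using k by (simp add: complex_eq_iff)
      then show ?thesis by (simp add: sum_power2_gt_zero_iff)
    qed
    then show "0 < e k * ((Re (y $ k))\<^sup>2 + (Im (y $ k))\<^sup>2)" using e by simp
    show "\<And>i. i \<in> UNIV \<Longrightarrow> 0 \<le> e i * ((Re (y $ i))\<^sup>2 + (Im (y $ i))\<^sup>2)"
      using e by (simp add: less_imp_le)
  qed auto
  finally show "0 < Re (\<Sum>i\<in>UNIV. cnj (x $ i) * ((U ** cdiag e ** cadj U) *v x) $ i)"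
    using eq by simp
qed

lemma fcalc_mult':
  "unitary_mat U \<Longrightarrow> Y ** fcalc U d a ** fcalc U d b = Y ** fcalc U d (a + b)"
  by (simp add: fcalc_mult matrix_mul_assoc[symmetric])

lemma M1_lemma:
  assumes d: "\<forall>i. d i > 0"
  shows "cadj (cdiag (\<lambda>i. d i powr (1/2)) ** cadj U ** R) ** (cdiag (\<lambda>i. d i powr (1/2)) ** cadj U ** R)
       = cadj R ** (U ** cdiag d ** cadj U) ** R"
proof -
  have h: "cdiag (\<lambda>i. d i powr (1/2)) ** cdiag (\<lambda>i. d i powr (1/2)) = cdiag d"
  proof -
    have "d i powr (1/2) * d i powr (1/2) = d i" for i
      using d by (simp add: powr_add[symmetric] less_imp_le)
    then show ?thesis by (simp add: cdiag_mult)
  qed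
  have "cadj (cdiag (\<lambda>i. d i powr (1/2)) ** cadj U ** R) ** (cdiag (\<lambda>i. d i powr (1/2)) ** cadj U ** R)
      = cadj R ** U ** (cdiag (\<lambda>i. d i powr (1/2)) ** cdiag (\<lambda>i. d i powr (1/2))) ** cadj U ** R"
    by (simp add: cadj_mult matrix_mul_assoc)
  also have "\<dots> = cadj R ** (U ** cdiag d ** cadj U) ** R" by (simp add: h matrix_mul_assoc)
  finally show ?thesis .
qed



lemma matrix_add_rdistrib: "((B + C) ** A) = (B ** A) + (C ** A)"
  by (simp add: matrix_matrix_mult_def vec_eq_iff distrib_right sum.distrib)

theorem mainTheorem11:
  fixes s t p :: real and A B Q :: "complex^'n^'n"
  assumes "s \<ge> 1" "t \<ge> 1" "p \<ge> 1"
    and "invertible A" "invertible B" "posdef_mat Q"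
  shows "(\<exists>X. posdef_mat X \<and>
            mpow X s + cadj A ** mpow X (-t) ** A + cadj B ** mpow X (-p) ** B = Q)
     \<longleftrightarrow>
         (\<exists>U d N1 N2. unitary_mat U \<and> (\<forall>i. d i > 0) \<and>
            A = mpow (U ** cdiag d ** cadj U) (t / (2 * s)) ** N1 \<and>
            B = mpow (U ** cdiag d ** cadj U) (p / (2 * s)) ** N2 \<and>
            (let M1 = mpow (cdiag d) (1/2) ** cadj U ** mpow Q (-1/2);
                 M2 = N1 ** mpow Q (-1/2);
                 M3 = N2 ** mpow Q (-1/2)
             in cadj M1 ** M1 + cadj M2 ** M2 + cadj M3 ** M3 = mat 1))"
proof -
  have s0: "s \<noteq> 0" using assms(1) by simp
  obtain W q where W: "unitary_mat W" and q: "\<forall>i. q i > 0" and Qeq: "Q = W ** cdiag q ** cadj W"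
    using spectral[OF assms(6)] by blast
  define R where "R = fcalc W q (-1/2)"
  have R: "mpow Q (-1/2) = R" unfolding R_def Qeq by (rule mpow_eq[OF W q])
  have cR: "cadj R = R" unfolding R_def by (rule cadj_fcalc)
  have RQR: "R ** Q ** R = mat 1"
  proof -
    have "R ** Q ** R = fcalc W q (-1/2) ** fcalc W q 1 ** fcalc W q (-1/2)"
      unfolding R_def Qeq fcalc_one[OF q] ..
    also have "\<dots> = mat 1" by (simp add: fcalc_mult[OF W] fcalc_zero[OF W q])
    finally show ?thesis .
  qed
  have Qinv: "fcalc W q (1/2) ** R = mat 1" "R ** fcalc W q (1/2) = mat 1"
    unfolding R_def by (simp_all add: fcalc_mult[OF W] fcalc_zero[OF W q])
  have QQ: "fcalc W q (1/2) ** fcalc W q (1/2) = Q"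
    unfolding Qeq by (simp add: fcalc_mult[OF W] fcalc_one[OF q])
  show ?thesis
  proof
    assume "\<exists>X. posdef_mat X \<and>
            mpow X s + cadj A ** mpow X (-t) ** A + cadj B ** mpow X (-p) ** B = Q"
    then obtain X where X: "posdef_mat X"
      and eq: "mpow X s + cadj A ** mpow X (-t) ** A + cadj B ** mpow X (-p) ** B = Q" by blast
    obtain V e where V: "unitary_mat V" and e: "\<forall>i. e i > 0" and Xeq: "X = V ** cdiag e ** cadj V"
      using spectral[OF X] by blast
    have mX: "mpow X a = fcalc V e a" for a unfolding Xeq by (rule mpow_eq[OF V e])
    define d where "d i = e i powr s" for i
    have d: "\<forall>i. d i > 0" using pos_powr[OF e] unfolding d_def by blast
    define N1 where "N1 = fcalc V e (-t/2) ** A"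
    define N2 where "N2 = fcalc V e (-p/2) ** B"
    have Vd: "V ** cdiag d ** cadj V = fcalc V e s" unfolding fcalc_def d_def ..
    have mpd: "mpow (V ** cdiag d ** cadj V) (r / (2 * s)) = fcalc V e (r/2)" for r
      unfolding Vd mpow_fcalc[OF V e] using s0 by simp
    have Aeq: "A = mpow (V ** cdiag d ** cadj V) (t / (2 * s)) ** N1"
      unfolding mpd N1_def by (simp add: matrix_mul_assoc fcalc_mult[OF V] fcalc_zero[OF V e])
    have Beq: "B = mpow (V ** cdiag d ** cadj V) (p / (2 * s)) ** N2"
      unfolding mpd N2_def by (simp add: matrix_mul_assoc fcalc_mult[OF V] fcalc_zero[OF V e])
    have m1: "cadj (mpow (cdiag d) (1/2) ** cadj V ** R) ** (mpow (cdiag d) (1/2) ** cadj V ** R)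
       = R ** mpow X s ** R"
      unfolding mpow_cdiag[OF d] M1_lemma[OF d] cR Vd mX ..
    have m2: "cadj (N1 ** R) ** (N1 ** R) = R ** (cadj A ** mpow X (-t) ** A) ** R"
    proof -
      have "cadj (N1 ** R) ** (N1 ** R) = R ** cadj A ** (fcalc V e (-t/2) ** fcalc V e (-t/2)) ** A ** R"
        unfolding N1_def by (simp add: cadj_mult cR cadj_fcalc matrix_mul_assoc)
      also have "fcalc V e (-t/2) ** fcalc V e (-t/2) = mpow X (-t)"
        by (simp add: fcalc_mult[OF V] mX)
      finally show ?thesis by (simp add: matrix_mul_assoc)
    qed
    have m3: "cadj (N2 ** R) ** (N2 ** R) = R ** (cadj B ** mpow X (-p) ** B) ** R"
    proof -
      have "cadj (N2 ** R) ** (N2 ** R) = R ** cadj B ** (fcalc V e (-p/2) ** fcalc V e (-p/2)) ** B ** R"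
        unfolding N2_def by (simp add: cadj_mult cR cadj_fcalc matrix_mul_assoc)
      also have "fcalc V e (-p/2) ** fcalc V e (-p/2) = mpow X (-p)"
        by (simp add: fcalc_mult[OF V] mX)
      finally show ?thesis by (simp add: matrix_mul_assoc)
    qed
    have "R ** mpow X s ** R + R ** (cadj A ** mpow X (-t) ** A) ** R + R ** (cadj B ** mpow X (-p) ** B) ** R
        = R ** (mpow X s + cadj A ** mpow X (-t) ** A + cadj B ** mpow X (-p) ** B) ** R"
      by (simp add: matrix_add_ldistrib matrix_add_rdistrib)
    also have "\<dots> = mat 1" unfolding eq by (rule RQR)
    finally have fin: "R ** mpow X s ** R + R ** (cadj A ** mpow X (-t) ** A) ** R + R ** (cadj B ** mpow X (-p) ** B) ** R = mat 1" .
    show "\<exists>U d N1 N2. unitary_mat U \<and> (\<forall>i. d i > 0) \<and>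
            A = mpow (U ** cdiag d ** cadj U) (t / (2 * s)) ** N1 \<and>
            B = mpow (U ** cdiag d ** cadj U) (p / (2 * s)) ** N2 \<and>
            (let M1 = mpow (cdiag d) (1/2) ** cadj U ** mpow Q (-1/2);
                 M2 = N1 ** mpow Q (-1/2);
                 M3 = N2 ** mpow Q (-1/2)
             in cadj M1 ** M1 + cadj M2 ** M2 + cadj M3 ** M3 = mat 1)"
      apply (rule exI[of _ V], rule exI[of _ d], rule exI[of _ N1], rule exI[of _ N2])
      using V d Aeq Beq fin unfolding Let_def R m1 m2 m3 by blast
  next
    assume "\<exists>U d N1 N2. unitary_mat U \<and> (\<forall>i. d i > 0) \<and>
            A = mpow (U ** cdiag d ** cadj U) (t / (2 * s)) ** N1 \<and>
            B = mpow (U ** cdiag d ** cadj U) (p / (2 * s)) ** N2 \<and>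
            (let M1 = mpow (cdiag d) (1/2) ** cadj U ** mpow Q (-1/2);
                 M2 = N1 ** mpow Q (-1/2);
                 M3 = N2 ** mpow Q (-1/2)
             in cadj M1 ** M1 + cadj M2 ** M2 + cadj M3 ** M3 = mat 1)"
    then obtain U d N1 N2 where U: "unitary_mat U" and d: "\<forall>i. d i > 0"
      and Aeq: "A = mpow (U ** cdiag d ** cadj U) (t / (2 * s)) ** N1"
      and Beq: "B = mpow (U ** cdiag d ** cadj U) (p / (2 * s)) ** N2"
      and H: "cadj (mpow (cdiag d) (1/2) ** cadj U ** R) ** (mpow (cdiag d) (1/2) ** cadj U ** R)
              + cadj (N1 ** R) ** (N1 ** R) + cadj (N2 ** R) ** (N2 ** R) = mat 1"
      unfolding Let_def R by blast
    define X where "X = fcalc U d (1/s)"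
    have dpos: "\<forall>i. d i powr (1/s) > 0" using pos_powr[OF d] by blast
    have Xpd: "posdef_mat X" unfolding X_def fcalc_def by (rule posdef_diag[OF U dpos])
    have mX: "mpow X a = fcalc U d (1/s * a)" for a unfolding X_def by (rule mpow_fcalc[OF U d])
    have mU: "mpow (U ** cdiag d ** cadj U) r = fcalc U d r" for r by (rule mpow_eq[OF U d])
    have e1: "mpow X s = U ** cdiag d ** cadj U" unfolding mX using s0 by (simp add: fcalc_one[OF d])
    have key: "fcalc U d (r / (2 * s)) ** fcalc U d (1/s * - r) ** fcalc U d (r / (2 * s)) = mat 1" for r
    proof -
      have "r / (2 * s) + 1/s * - r + r / (2 * s) = 0" using s0 by (simp add: field_simps)
      then show ?thesis by (simp add: fcalc_mult[OF U] fcalc_zero[OF U d])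
    qed
    have e2: "cadj A ** mpow X (-t) ** A = cadj N1 ** N1"
    proof -
      have "cadj A ** mpow X (-t) ** A = cadj N1 ** (fcalc U d (t / (2 * s)) ** fcalc U d (1/s * - t) ** fcalc U d (t / (2 * s))) ** N1"
        unfolding Aeq mU mX by (simp add: cadj_mult cadj_fcalc matrix_mul_assoc)
      then show ?thesis by (simp only: key[of t] matrix_mul_rid)
    qed
    have e3: "cadj B ** mpow X (-p) ** B = cadj N2 ** N2"
    proof -
      have "cadj B ** mpow X (-p) ** B = cadj N2 ** (fcalc U d (p / (2 * s)) ** fcalc U d (1/s * - p) ** fcalc U d (p / (2 * s))) ** N2"
        unfolding Beq mU mX by (simp add: cadj_mult cadj_fcalc matrix_mul_assoc)
      then show ?thesis by (simp only: key[of p] matrix_mul_rid)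
    qed
    define Z where "Z = U ** cdiag d ** cadj U + cadj N1 ** N1 + cadj N2 ** N2"
    have "R ** Z ** R = mat 1"
    proof -
      have "R ** Z ** R = R ** (U ** cdiag d ** cadj U) ** R + R ** (cadj N1 ** N1) ** R + R ** (cadj N2 ** N2) ** R"
        unfolding Z_def by (simp add: matrix_add_ldistrib matrix_add_rdistrib)
      also have "\<dots> = mat 1"
        using H unfolding mpow_cdiag[OF d] M1_lemma[OF d] cR by (simp add: cadj_mult cR matrix_mul_assoc)
      finally show ?thesis .
    qed
    then have "fcalc W q (1/2) ** (R ** Z ** R) ** fcalc W q (1/2) = Q" using QQ by simp
    then have "(fcalc W q (1/2) ** R) ** Z ** (R ** fcalc W q (1/2)) = Q" by (simp add: matrix_mul_assoc)
    then have ZQ: "Z = Q" using Qinv by simp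
    have "mpow X s + cadj A ** mpow X (-t) ** A + cadj B ** mpow X (-p) ** B = Q"
      unfolding e1 e2 e3 ZQ[symmetric] Z_def ..
    then show "\<exists>X. posdef_mat X \<and>
            mpow X s + cadj A ** mpow X (-t) ** A + cadj B ** mpow X (-p) ** B = Q"
      using Xpd by blast
  qed
qed


end
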